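(* Let $n\ge 3$ and $m\ge 1$ be integers, and let $Q_{n,1},\dots,Q_{n,m}$ be the partition of $\{0,1,\dots,m+1\}^n$ defined below. Then for every $1\le i<j\le m$ and every unit vector $v\in\mathbb{Z}^n$ parallel to a coordinate axis, $Q_{n,i}+(m+2)v$ and $Q_{n,j}$ are adjacent (the partition is externally adjacent).
   Context: Define $f:\{0,\dots,m+1\}^3\to\{1,\dots,m\}$ by: $f(x,y,z)=y$ if $0\le x\le m$, $1\le y\le m$, $z=0$; $f=x$ if $1\le x\le m$, $0\le y\le m$, $z=m+1$; $f=y$ if $x=0$, $1\le y\le m$, $1\le z\le m$; $f=x$ if $1\le x\le m$, $y=0$, $1\le z\le m$; $f=z$ if $1\le x\le m+1$, $1\le y\le m+1$, $1\le z\le m$; and $f=1$ at all remaining points. Let $f_3=f$ and for $n\ge4$: $f_n(x_1,\dots,x_n)=f_{n-1}(x_1,x_2,x_3,\dots,x_{n-1})$ if $0\le x_n\le m$, and $f_n(x_1,\dots,x_n)=f_{n-1}(m+1-x_2,x_1,x_3,\dots,x_{n-1})$ if $x_n=m+1$. Let $Q_{n,i}=\{x\in\{0,\dots,m+1\}^n: f_n(x)=i\}$. Two disjoint sets $P,Q\subset\mathbb{Z}^n$ are adjacent if there exist $p\in P$, $q\in Q$ and a unit vector $v$ parallel to a coordinate axis with $p+v=q$. *)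

theory Defs
  imports Main
begin

text \<open>Points of Z^n are represented as integer lists of length n.\<close>

definition f3 :: "int \<Rightarrow> int \<Rightarrow> int \<Rightarrow> int \<Rightarrow> int" where
  "f3 m x y z =
    (if 0 \<le> x \<and> x \<le> m \<and> 1 \<le> y \<and> y \<le> m \<and> z = 0 then y
     else if 1 \<le> x \<and> x \<le> m \<and> 0 \<le> y \<and> y \<le> m \<and> z = m + 1 then x
     else if x = 0 \<and> 1 \<le> y \<and> y \<le> m \<and> 1 \<le> z \<and> z \<le> m then y
     else if 1 \<le> x \<and> x \<le> m \<and> y = 0 \<and> 1 \<le> z \<and> z \<le> m then x
     else if 1 \<le> x \<and> x \<le> m + 1 \<and> 1 \<le> y \<and> y \<le> m + 1 \<and> 1 \<le> z \<and> z \<le> m then z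
     else 1)"

text \<open>fn m n xs = f_n(x_1,...,x_n) where xs = [x_1,...,x_n] (0-indexed list).\<close>
fun fn :: "int \<Rightarrow> nat \<Rightarrow> int list \<Rightarrow> int" where
  "fn m n xs =
    (if n \<le> 3 then f3 m (xs ! 0) (xs ! 1) (xs ! 2)
     else if 0 \<le> xs ! (n - 1) \<and> xs ! (n - 1) \<le> m
       then fn m (n - 1) (take (n - 1) xs)
       else fn m (n - 1) ((m + 1 - xs ! 1) # xs ! 0 # drop 2 (take (n - 1) xs)))"

definition Q :: "nat \<Rightarrow> nat \<Rightarrow> nat \<Rightarrow> int list set" where
  "Q n m i = {x. length x = n \<and> (\<forall>k<n. 0 \<le> x ! k \<and> x ! k \<le> int m + 1)
                 \<and> fn (int m) n x = int i}"

definition vadd :: "int list \<Rightarrow> int list \<Rightarrow> int list" where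
  "vadd xs ys = map2 (+) xs ys"

definition vscale :: "int \<Rightarrow> int list \<Rightarrow> int list" where
  "vscale c xs = map ((*) c) xs"

definition axis_units :: "nat \<Rightarrow> int list set" where
  "axis_units n = {(replicate n 0)[k := s] | k s. k < n \<and> (s = 1 \<or> s = -1)}"

definition adjacent :: "nat \<Rightarrow> int list set \<Rightarrow> int list set \<Rightarrow> bool" where
  "adjacent n P R \<longleftrightarrow> P \<inter> R = {} \<and>
     (\<exists>p\<in>P. \<exists>q\<in>R. \<exists>v\<in>axis_units n. vadd p v = q)"

end

theory Submission imports Defs begin
declare fn.simps[simp del]

lemma fn3: "length xs = 3 \<Longrightarrow> fn m 3 xs = f3 m (xs!0) (xs!1) (xs!2)"
  by (subst fn.simps) simp

lemma fn_snoc_low: "3 \<le> length xs \<Longrightarrow> 0 \<le> y \<Longrightarrow> y \<le> m \<Longrightarrow>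
   fn m (Suc (length xs)) (xs@[y]) = fn m (length xs) xs"
  by (subst fn.simps) (simp add: nth_append)

lemma fn_snoc_high: "3 \<le> length xs \<Longrightarrow> 0 \<le> m \<Longrightarrow>
   fn m (Suc (length xs)) (xs@[m+1]) = fn m (length xs) ((m+1 - xs!1) # xs!0 # drop 2 xs)"
proof -
  assume "3 \<le> length xs" "0 \<le> m"
  then obtain a b c rest where "xs = a#b#c#rest"
    by (cases xs; cases "tl xs"; cases "tl (tl xs)") auto
  then show ?thesis using \<open>0 \<le> m\<close> by (subst fn.simps) (simp add: nth_append)
qed

lemma fn_zeros: "3 \<le> length xs \<Longrightarrow> 0 \<le> m \<Longrightarrow>
   fn m (length xs + r) (xs @ replicate r 0) = fn m (length xs) xs"
proof (induction r)
  case 0 then show ?case by simp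
next
  case (Suc r)
  have "xs @ replicate (Suc r) 0 = (xs @ replicate r 0) @ [0]"
    by (simp add: replicate_append_same)
  moreover have "length xs + Suc r = Suc (length (xs @ replicate r 0))" by simp
  ultimately show ?case using Suc fn_snoc_low[of "xs @ replicate r 0" 0 m] by simp
qed

lemma witness:
  fixes m :: nat and a b :: int
  assumes "3 \<le> n" "k < n" "1 \<le> a" "a \<le> int m" "1 \<le> b" "b \<le> int m"
  shows "\<exists>x. length x = n \<and> (\<forall>l<n. 0 \<le> x!l \<and> x!l \<le> int m + 1)
     \<and> fn (int m) n (x[k:=0]) = a \<and> fn (int m) n (x[k:=int m+1]) = b"
proof -
  obtain r where r: "n = 3 + r" using assms(1) by (metis le_Suc_ex)
  show ?thesis
  proof (cases "k < 3")
    case True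
    define w where "w = (if k = 0 then [0,a,b] else if k = 1 then [a,0,b] else [b,a,0::int])"
    have lw: "length w = 3" by (simp add: w_def)
    have eq: "\<And>c. (w @ replicate r 0)[k:=c] = w[k:=c] @ replicate r 0"
      using True lw by (simp add: list_update_append)
    have z: "\<And>c. fn (int m) n ((w @ replicate r 0)[k:=c]) = fn (int m) 3 (w[k:=c])"
      using eq fn_zeros[of "w[k:=_]" "int m" r] lw r by simp
    show ?thesis
    proof (intro exI conjI)
      show "length (w @ replicate r 0) = n" using lw r by simp
      show "\<forall>l<n. 0 \<le> (w @ replicate r 0)!l \<and> (w @ replicate r 0)!l \<le> int m + 1"
      proof (intro allI impI)
        fix l assume "l < n"
        then show "0 \<le> (w @ replicate r 0)!l \<and> (w @ replicate r 0)!l \<le> int m + 1"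
          using assms lw r by (auto simp: nth_append w_def less_Suc_eq numeral_3_eq_3)
      qed
      show "fn (int m) n ((w @ replicate r 0)[k:=0]) = a"
        unfolding z using True assms
        by (subst fn3) (auto simp: w_def f3_def less_Suc_eq numeral_3_eq_3)
      show "fn (int m) n ((w @ replicate r 0)[k:=int m + 1]) = b"
        unfolding z using True assms
        by (subst fn3) (auto simp: w_def f3_def less_Suc_eq numeral_3_eq_3)
    qed
  next
    case False
    define u where "u = [b,a,0::int] @ replicate (k-3) 0"
    have lu: "length u = k" using False by (simp add: u_def numeral_3_eq_3)
    define x where "x = u @ [0] @ replicate (n-k-1) 0"
    have xu: "\<And>c. x[k:=c] = (u @ [c]) @ replicate (n-k-1) 0"
      using lu by (simp add: x_def list_update_append)
    have lk: "length (u @ [c]) + (n-k-1) = n" for c using lu assms by simp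
    have z: "fn (int m) n (x[k:=c]) = fn (int m) (Suc k) (u @ [c])" for c
      using xu fn_zeros[of "u @ [c]" "int m" "n-k-1"] lk lu False by simp
    have f0: "fn (int m) (length u) u = f3 (int m) b a 0"
      using fn_zeros[of "[b,a,0]" "int m" "k-3"] fn3[of "[b,a,0]" "int m"] False
      by (simp add: u_def numeral_3_eq_3)
    have f1: "fn (int m) (length u) ((int m + 1 - u!1) # u!0 # drop 2 u) = f3 (int m) (int m + 1 - a) b 0"
      using fn_zeros[of "[int m + 1 - a,b,0]" "int m" "k-3"] fn3[of "[int m + 1 - a,b,0]" "int m"] False
      by (simp add: u_def numeral_3_eq_3)
    show ?thesis
    proof (intro exI conjI)
      show "length x = n" using lu assms by (simp add: x_def)
      show "\<forall>l<n. 0 \<le> x!l \<and> x!l \<le> int m + 1"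
      proof (intro allI impI)
        fix l assume "l < n"
        then show "0 \<le> x!l \<and> x!l \<le> int m + 1"
          using assms lu by (auto simp: x_def u_def nth_append nth_Cons split: nat.splits)
      qed
      show "fn (int m) n (x[k:=0]) = a"
        unfolding z using fn_snoc_low[of u 0 "int m"] lu False f0 assms
        by (simp add: f3_def)
      show "fn (int m) n (x[k:=int m + 1]) = b"
        unfolding z using fn_snoc_high[of u "int m"] lu False f1 assms
        by (simp add: f3_def)
    qed
  qed
qed

lemma vadd_unit: "length p = n \<Longrightarrow> k < n \<Longrightarrow>
   vadd p (vscale c ((replicate n 0)[k:=s])) = p[k := p!k + c*s]"
  by (rule nth_equalityI) (auto simp: vadd_def vscale_def nth_list_update)

lemma vadd_unit1: "length p = n \<Longrightarrow> k < n \<Longrightarrow>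
   vadd p ((replicate n 0)[k:=s]) = p[k := p!k + s]"
  by (rule nth_equalityI) (auto simp: vadd_def nth_list_update)

theorem lemma5p4:
  fixes n m i j :: nat
  assumes "n \<ge> 3" and "m \<ge> 1" and "1 \<le> i" and "i < j" and "j \<le> m"
      and "v \<in> axis_units n"
  shows "adjacent n ((\<lambda>x. vadd x (vscale (int m + 2) v)) ` Q n m i) (Q n m j)"
proof -
  obtain k s where v: "v = (replicate n 0)[k:=s]" and k: "k < n" and s: "s = 1 \<or> s = -1"
    using assms(6) unfolding axis_units_def by blast
  have disj: "((\<lambda>x. vadd x (vscale (int m + 2) v)) ` Q n m i) \<inter> Q n m j = {}"
  proof (rule ccontr)
    assume "\<not> ?thesis"
    then obtain x where x: "x \<in> Q n m i" and y: "vadd x (vscale (int m + 2) v) \<in> Q n m j" by blast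
    have lx: "length x = n" and rx: "0 \<le> x!k" "x!k \<le> int m + 1" using x k by (auto simp: Q_def)
    have "vadd x (vscale (int m + 2) v) = x[k := x!k + (int m + 2)*s]"
      using vadd_unit[OF lx k] v by simp
    then have "0 \<le> x!k + (int m + 2)*s \<and> x!k + (int m + 2)*s \<le> int m + 1"
      using y k lx by (auto simp: Q_def)
    then show False using s rx by auto
  qed
  have ex: "\<exists>p\<in>Q n m i. \<exists>q\<in>Q n m j. \<exists>u\<in>axis_units n. vadd (vadd p (vscale (int m + 2) v)) u = q"
  proof (cases "s = 1")
    case True
    obtain x where lx: "length x = n" and rx: "\<forall>l<n. 0 \<le> x!l \<and> x!l \<le> int m + 1"
      and f0: "fn (int m) n (x[k:=0]) = int i" and f1: "fn (int m) n (x[k:=int m+1]) = int j"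
      using witness[of n k "int i" m "int j"] assms k by auto
    have p: "x[k:=0] \<in> Q n m i" using lx rx f0 k by (auto simp: Q_def nth_list_update)
    have q: "x[k:=int m+1] \<in> Q n m j" using lx rx f1 k by (auto simp: Q_def nth_list_update)
    have u: "(replicate n 0)[k:=-1] \<in> axis_units n" using k by (auto simp: axis_units_def)
    have "vadd (vadd (x[k:=0]) (vscale (int m + 2) v)) ((replicate n 0)[k:=-1]) = x[k:=int m+1]"
      using vadd_unit[of "x[k:=0]" n k] vadd_unit1[of "x[k:=int m + 2]" n k] lx k v True by (simp add: add.commute)
    then show ?thesis using p q u by blast
  next
    case False
    then have s1: "s = -1" using s by simp
    obtain x where lx: "length x = n" and rx: "\<forall>l<n. 0 \<le> x!l \<and> x!l \<le> int m + 1"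
      and f0: "fn (int m) n (x[k:=0]) = int j" and f1: "fn (int m) n (x[k:=int m+1]) = int i"
      using witness[of n k "int j" m "int i"] assms k by auto
    have p: "x[k:=int m+1] \<in> Q n m i" using lx rx f1 k by (auto simp: Q_def nth_list_update)
    have q: "x[k:=0] \<in> Q n m j" using lx rx f0 k by (auto simp: Q_def nth_list_update)
    have u: "(replicate n 0)[k:=1] \<in> axis_units n" using k by (auto simp: axis_units_def)
    have "vadd (vadd (x[k:=int m+1]) (vscale (int m + 2) v)) ((replicate n 0)[k:=1]) = x[k:=0]"
      using vadd_unit[of "x[k:=int m+1]" n k] vadd_unit1[of "x[k:=-1]" n k] lx k v s1 by (simp add: add.commute)
    then show ?thesis using p q u by blast
  qed
  show ?thesis unfolding adjacent_def using disj ex by blast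
qed

end
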